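(* Let $N\ge1$, $m\ge2$, let $A\in\mathbb{R}^{m\times m}$ be the integrator matrix, $C\in\mathbb{R}^{1\times m}$, $K_5\in\mathbb{R}^{1\times m}$, and $K_6\in\mathbb{R}^{m\times1}$ such that every eigenvalue of $A+K_6C$ has modulus strictly less than $1$. Fix $e_0\in\mathbb{R}^{Nm}$ and set $\omega_d[k]=(I_N\otimes(K_5K_6C(A+K_6C)^k))e_0\in\mathbb{R}^N$. Consider $$\bar Z[k+1]=(I_N-S[k])\bar Z[k]+\omega_d[k],\qquad k=0,1,2,\dots,$$ with $\bar Z[k]=(\bar z_1[k],\dots,\bar z_N[k])^T\in\mathbb{R}^N$ and $S[k]$ defined from the switching graph $\mathcal{G}_{\sigma[k]}$ as in the context. If $\mathcal{G}_{\sigma[k]}$ is uniformly jointly quasi-strongly connected in the discrete-time sense, then for every $\bar Z[0]\in\mathbb{R}^N$ there exists $\bar z^*\in\mathbb{R}$ such that $\lim_{k\to\infty}\bar z_i[k]=\bar z^*$ for all $i=1,\dots,N$.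
   Context: $A$ has ones on the superdiagonal and zeros elsewhere; $\otimes$ is the Kronecker product. Graphs: nodes $v_1,\dots,v_N$; edge $e_{ij}$ from $v_j$ to $v_i$; no self-edges; a finite index set $\mathcal{S}$ of digraphs, graph $\mathcal{G}_q$ having fixed weights $\alpha^{ij}_q>0$ on its edges ($0$ otherwise), $\mathcal{N}_i(q)=\{j:e_{ij}\in\mathcal{G}_q\}$; $\sigma:\{0,1,2,\dots\}\to\mathcal{S}$ arbitrary. $S[k]\in\mathbb{R}^{N\times N}$: with $d_i[k]=\sum_{j\in\mathcal{N}_i(\sigma[k])}\alpha^{ij}_{\sigma[k]}$, the $(i,i)$ entry is $d_i[k]/(1+d_i[k])$ and the $(i,j)$ entry ($i\ne j$) is $-\alpha^{ij}_{\sigma[k]}/(1+d_i[k])$. A digraph is quasi-strongly connected if some node has a directed path to every other node. $\mathcal{G}_{\sigma[k]}$ is uniformly jointly quasi-strongly connected in the discrete-time sense if there is an integer $M>0$ such that for every $k\ge0$ the graph with edge set $\bigcup_{i=k}^{k+M}\mathcal{E}(\mathcal{G}_{\sigma[i]})$ is quasi-strongly connected. *)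

theory Defs
  imports "Jordan_Normal_Form.Matrix" "Jordan_Normal_Form.Char_Poly"
begin

definition kron :: "'a::times mat \<Rightarrow> 'a mat \<Rightarrow> 'a mat" where
  "kron P Q = mat (dim_row P * dim_row Q) (dim_col P * dim_col Q)
     (\<lambda>(i,j). P $$ (i div dim_row Q, j div dim_col Q) * Q $$ (i mod dim_row Q, j mod dim_col Q))"

definition integrator :: "nat \<Rightarrow> real mat" where
  "integrator m = mat m m (\<lambda>(i,j). if j = Suc i then 1 else 0)"

text \<open>Nodes are 0..N-1. alpha q i j is the weight of edge e_ij (from v_j to v_i) in graph q;
  an edge exists iff the weight is positive.\<close>
definition deg :: "('q \<Rightarrow> nat \<Rightarrow> nat \<Rightarrow> real) \<Rightarrow> nat \<Rightarrow> 'q \<Rightarrow> nat \<Rightarrow> real" where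
  "deg alpha N q i = (\<Sum>j\<in>{j. j < N \<and> j \<noteq> i \<and> alpha q i j > 0}. alpha q i j)"

definition Smat :: "('q \<Rightarrow> nat \<Rightarrow> nat \<Rightarrow> real) \<Rightarrow> nat \<Rightarrow> 'q \<Rightarrow> real mat" where
  "Smat alpha N q = mat N N (\<lambda>(i,j).
     if i = j then deg alpha N q i / (1 + deg alpha N q i)
     else - alpha q i j / (1 + deg alpha N q i))"

text \<open>Edge set (as pairs (from, to)) of the union graph over time steps k..k+M.\<close>
definition union_edges :: "('q \<Rightarrow> nat \<Rightarrow> nat \<Rightarrow> real) \<Rightarrow> nat \<Rightarrow> (nat \<Rightarrow> 'q) \<Rightarrow> nat \<Rightarrow> nat \<Rightarrow> (nat \<times> nat) set" where
  "union_edges alpha N sigma k M =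
     {(j, i). i < N \<and> j < N \<and> i \<noteq> j \<and> (\<exists>t\<in>{k..k+M}. alpha (sigma t) i j > 0)}"

definition quasi_strongly_connected :: "nat \<Rightarrow> (nat \<times> nat) set \<Rightarrow> bool" where
  "quasi_strongly_connected N E = (\<exists>r<N. \<forall>v<N. v \<noteq> r \<longrightarrow> (r, v) \<in> E\<^sup>+)"

definition UJQSC :: "('q \<Rightarrow> nat \<Rightarrow> nat \<Rightarrow> real) \<Rightarrow> nat \<Rightarrow> (nat \<Rightarrow> 'q) \<Rightarrow> bool" where
  "UJQSC alpha N sigma = (\<exists>M::nat. M > 0 \<and>
     (\<forall>k. quasi_strongly_connected N (union_edges alpha N sigma k M)))"

definition omega_d :: "nat \<Rightarrow> real mat \<Rightarrow> real mat \<Rightarrow> real mat \<Rightarrow> real mat \<Rightarrow> real vec \<Rightarrow> nat \<Rightarrow> real vec" where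
  "omega_d N A C K5 K6 e0 k =
     kron (1\<^sub>m N) (K5 * K6 * C * ((A + K6 * C) ^\<^sub>m k)) *\<^sub>v e0"

end

theory Submission
  imports Defs "Jordan_Normal_Form.Spectral_Radius"
begin


definition Eu :: "nat \<Rightarrow> (nat \<Rightarrow> nat \<Rightarrow> nat \<Rightarrow> real) \<Rightarrow> nat \<Rightarrow> nat \<Rightarrow> (nat \<times> nat) set" where
  "Eu N P Mw k = {(j,i). i<N \<and> j<N \<and> i\<noteq>j \<and> (\<exists>t\<in>{k..k+Mw}. P t i j > 0)}"

locale cons =
  fixes N :: nat and P :: "nat \<Rightarrow> nat \<Rightarrow> nat \<Rightarrow> real" and \<delta> :: real and Mw :: nat
  assumes P0: "\<And>t i j. i<N \<Longrightarrow> j<N \<Longrightarrow> 0 \<le> P t i j"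
  and Prow: "\<And>t i. i<N \<Longrightarrow> (\<Sum>j<N. P t i j) = 1"
  and Pdiag: "\<And>t i. i<N \<Longrightarrow> \<delta> \<le> P t i i"
  and Ppos: "\<And>t i j. i<N \<Longrightarrow> j<N \<Longrightarrow> 0 < P t i j \<Longrightarrow> \<delta> \<le> P t i j"
  and dpos: "0 < \<delta>"
  and conn: "\<And>k. \<exists>r<N. \<forall>v<N. v\<noteq>r \<longrightarrow> (r,v) \<in> (Eu N P Mw k)\<^sup>+"
begin

definition recur :: "(nat \<Rightarrow> nat \<Rightarrow> real) \<Rightarrow> (nat \<Rightarrow> nat \<Rightarrow> real) \<Rightarrow> bool" where
  "recur x w \<longleftrightarrow> (\<forall>t i. i<N \<longrightarrow> x (Suc t) i = (\<Sum>j<N. P t i j * x t j) + w t i)"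

lemma Npos: "0 < N" using conn[of 0] by auto

lemma dle1: "\<delta> \<le> 1"
proof -
  have "P 0 0 0 \<le> (\<Sum>j<N. P 0 0 j)"
    by (rule member_le_sum) (use Npos P0 in auto)
  thus ?thesis using Prow[of 0 0] Pdiag[of 0 0] Npos by auto
qed

lemma recur_neg: "recur x w \<Longrightarrow> recur (\<lambda>t i. - x t i) (\<lambda>t i. - w t i)"
  unfolding recur_def by (auto simp: sum_negf)

lemma step:
  assumes rec: "recur x w" and we: "\<forall>t i. i<N \<longrightarrow> \<bar>w t i\<bar> \<le> e t"
    and all: "\<forall>j<N. x t j \<le> U" and j0: "j0 < N" and m: "x t j0 \<le> U - \<beta>" and b: "\<beta> \<ge> 0"
    and i: "i<N" and Pd: "\<delta> \<le> P t i j0"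
  shows "x (Suc t) i \<le> U + e t - \<delta> * \<beta>"
proof -
  have "(\<Sum>j<N. P t i j * x t j) \<le> (\<Sum>j<N. P t i j * (U - (if j = j0 then \<beta> else 0)))"
    apply (rule sum_mono) apply (rule mult_left_mono) using all m P0 i by auto
  also have "\<dots> = U * (\<Sum>j<N. P t i j) - (\<Sum>j<N. (if j = j0 then P t i j * \<beta> else 0))"
  proof -
    have "(\<Sum>j<N. P t i j * (U - (if j = j0 then \<beta> else 0))) = (\<Sum>j<N. U * P t i j - (if j = j0 then P t i j * \<beta> else 0))"
      by (rule sum.cong) (auto simp: algebra_simps)
    thus ?thesis by (simp add: sum_subtractf sum_distrib_left)
  qed
  also have "\<dots> = U - P t i j0 * \<beta>" using Prow[OF i] j0 by simp
  also have "\<dots> \<le> U - \<delta> * \<beta>" using Pd b by (simp add: mult_right_mono)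
  finally have "(\<Sum>j<N. P t i j * x t j) \<le> U - \<delta> * \<beta>" .
  moreover have "x (Suc t) i = (\<Sum>j<N. P t i j * x t j) + w t i" using rec i unfolding recur_def by blast
  moreover have "\<bar>w t i\<bar> \<le> e t" using we i by blast
  ultimately show ?thesis by linarith
qed

definition Ec :: "(nat \<Rightarrow> real) \<Rightarrow> nat \<Rightarrow> nat \<Rightarrow> real" where
  "Ec e k0 s = (\<Sum>j<s. e (k0+j))"

lemma Ec_Suc: "Ec e k0 (Suc s) = Ec e k0 s + e (k0+s)"
  unfolding Ec_def by simp

lemma all_bound:
  assumes rec: "recur x w" and we: "\<forall>t i. i<N \<longrightarrow> \<bar>w t i\<bar> \<le> e t"
    and init: "\<forall>i<N. x k0 i \<le> B"
  shows "\<forall>i<N. x (k0+s) i \<le> B + Ec e k0 s"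
proof (induction s)
  case 0 then show ?case using init by (simp add: Ec_def)
next
  case (Suc s)
  show ?case
  proof (intro allI impI)
    fix i assume i: "i<N"
    have "x (Suc (k0+s)) i \<le> (B + Ec e k0 s) + e (k0+s) - \<delta> * 0"
      by (rule step[OF rec we Suc.IH i]) (use i Pdiag Suc.IH in auto)
    thus "x (k0 + Suc s) i \<le> B + Ec e k0 (Suc s)" by (simp add: Ec_Suc)
  qed
qed

lemma persist:
  assumes rec: "recur x w" and we: "\<forall>t i. i<N \<longrightarrow> \<bar>w t i\<bar> \<le> e t"
    and init: "\<forall>i<N. x k0 i \<le> B" and i: "i<N"
    and m: "x (k0+s) i \<le> B + Ec e k0 s - \<beta>" and b: "\<beta> \<ge> 0"
  shows "x (k0+(s+d)) i \<le> B + Ec e k0 (s+d) - \<delta>^d * \<beta>"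
proof (induction d)
  case 0 then show ?case using m by simp
next
  case (Suc d)
  have "x (Suc (k0+(s+d))) i \<le> (B + Ec e k0 (s+d)) + e (k0+(s+d)) - \<delta> * (\<delta>^d * \<beta>)"
    apply (rule step[OF rec we _ i])
    using all_bound[OF rec we init, of "s+d"] Suc.IH i Pdiag b dpos by auto
  thus ?case by (simp add: Ec_Suc algebra_simps)
qed

lemma spread:
  assumes rec: "recur x w" and we: "\<forall>t i. i<N \<longrightarrow> \<bar>w t i\<bar> \<le> e t"
    and init: "\<forall>i<N. x k0 i \<le> B" and i: "i<N" and j: "j<N"
    and m: "x (k0+s) j \<le> B + Ec e k0 s - \<beta>" and b: "\<beta> \<ge> 0"
    and pp: "P (k0+s) i j > 0"
  shows "x (k0+Suc s) i \<le> B + Ec e k0 (Suc s) - \<delta> * \<beta>"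
proof -
  have "x (Suc (k0+s)) i \<le> (B + Ec e k0 s) + e (k0+s) - \<delta> * \<beta>"
    apply (rule step[OF rec we _ j m b i])
    using all_bound[OF rec we init, of "s"] Ppos[OF i j pp] by auto
  thus ?thesis by (simp add: Ec_Suc algebra_simps)
qed

lemma crossing:
  assumes "(r,v) \<in> E\<^sup>+" "r \<in> S" "v \<notin> S"
  shows "\<exists>j i. (j,i) \<in> E \<and> j \<in> S \<and> i \<notin> S"
  using assms by (induction rule: trancl_induct) auto

lemma window:
  assumes rec: "recur x w" and we: "\<forall>t i. i<N \<longrightarrow> \<bar>w t i\<bar> \<le> e t"
    and init: "\<forall>i<N. x k0 i \<le> B"
    and S: "S \<subseteq> {..<N}" and mS: "\<forall>i\<in>S. x (k0+s) i \<le> B + Ec e k0 s - \<beta>" and b: "\<beta> \<ge> 0"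
    and v: "v < N" "v \<notin> S" and r: "r \<in> S"
    and root: "\<forall>v<N. v\<noteq>r \<longrightarrow> (r,v) \<in> (Eu N P Mw (k0+s))\<^sup>+"
  shows "\<exists>i1<N. i1 \<notin> S \<and> (\<forall>i\<in>insert i1 S. x (k0+(s+Suc Mw)) i \<le> B + Ec e k0 (s+Suc Mw) - \<delta>^(Suc Mw) * \<beta>)"
proof -
  have "v \<noteq> r" using v r by auto
  then have "(r,v) \<in> (Eu N P Mw (k0+s))\<^sup>+" using root v by auto
  from crossing[OF this r v(2)] obtain j i where ji: "(j,i) \<in> Eu N P Mw (k0+s)" "j\<in>S" "i\<notin>S" by blast
  from ji(1) obtain t where i: "i<N" and j: "j<N" and t: "t\<in>{k0+s..k0+s+Mw}" and pt: "P t i j > 0"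
    unfolding Eu_def by auto
  define u where "u = t - (k0+s)"
  have u: "u \<le> Mw" "t = k0 + (s+u)" using t unfolding u_def by auto
  have d0: "0 \<le> \<delta>" using dpos by simp
  have "x (k0+(s+u)) j \<le> B + Ec e k0 (s+u) - \<delta>^u * \<beta>"
    using persist[OF rec we init j _ b] mS ji(2) by blast
  then have "x (k0+Suc (s+u)) i \<le> B + Ec e k0 (Suc (s+u)) - \<delta> * (\<delta>^u * \<beta>)"
    by (rule spread[OF rec we init i j]) (use b d0 pt u in auto)
  then have "x (k0+(Suc (s+u) + (Mw - u))) i \<le> B + Ec e k0 (Suc (s+u) + (Mw-u)) - \<delta>^(Mw-u) * (\<delta> * (\<delta>^u * \<beta>))"
    by (rule persist[OF rec we init i]) (use b d0 in auto)
  moreover have "Suc (s+u) + (Mw - u) = s + Suc Mw" using u by auto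
  moreover have "\<delta>^(Mw-u) * (\<delta> * (\<delta>^u * \<beta>)) = \<delta>^(Suc Mw) * \<beta>"
  proof -
    have "\<delta>^(Mw-u) * (\<delta> * (\<delta>^u * \<beta>)) = \<delta>^(Mw - u + u + 1) * \<beta>" by (simp add: power_add algebra_simps)
    also have "Mw - u + u + 1 = Suc Mw" using u by simp
    finally show ?thesis .
  qed
  ultimately have mi: "x (k0+(s+Suc Mw)) i \<le> B + Ec e k0 (s+Suc Mw) - \<delta>^(Suc Mw) * \<beta>" by simp
  have "\<forall>i'\<in>S. x (k0+(s+Suc Mw)) i' \<le> B + Ec e k0 (s+Suc Mw) - \<delta>^(Suc Mw) * \<beta>"
    using persist[OF rec we init _ _ b] mS S by blast
  with mi ji(3) i show ?thesis by blast
qed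

lemma persist_set:
  assumes rec: "recur x w" and we: "\<forall>t i. i<N \<longrightarrow> \<bar>w t i\<bar> \<le> e t"
    and init: "\<forall>i<N. x k0 i \<le> B" and S: "S \<subseteq> {..<N}"
    and m: "\<forall>i\<in>S. x (k0+s) i \<le> B + Ec e k0 s - \<beta>" and b: "\<beta> \<ge> 0"
  shows "\<forall>i\<in>S. x (k0+(s+d)) i \<le> B + Ec e k0 (s+d) - \<delta>^d * \<beta>"
  using persist[OF rec we init _ _ b] m S by blast

lemma we_neg: "\<forall>t i. i<N \<longrightarrow> \<bar>(w::nat\<Rightarrow>nat\<Rightarrow>real) t i\<bar> \<le> e t \<Longrightarrow> \<forall>t i. i<N \<longrightarrow> \<bar>- w t i\<bar> \<le> e t"
  by (simp only: abs_minus_cancel)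

lemma iter:
  assumes rec: "recur x w" and we: "\<forall>t i. i<N \<longrightarrow> \<bar>w t i\<bar> \<le> e t"
    and init: "\<forall>i<N. b \<le> x k0 i \<and> x k0 i \<le> B" and bB: "b \<le> B"
  shows "\<exists>L H. L \<subseteq> {..<N} \<and> H \<subseteq> {..<N} \<and> L \<union> H = {..<N} \<and>
     (L = {..<N} \<or> H = {..<N} \<or> N + n \<le> card L + card H) \<and>
     (\<forall>i\<in>L. x (k0+n*Suc Mw) i \<le> B + Ec e k0 (n*Suc Mw) - \<delta>^(n*Suc Mw) * ((B-b)/2)) \<and>
     (\<forall>i\<in>H. - x (k0+n*Suc Mw) i \<le> -b + Ec e k0 (n*Suc Mw) - \<delta>^(n*Suc Mw) * ((B-b)/2))"
proof (induction n)
  case 0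
  define L where "L = {i. i<N \<and> x k0 i \<le> (B+b)/2}"
  define H where "H = {i. i<N \<and> x k0 i \<ge> (B+b)/2}"
  have LH: "L \<union> H = {..<N}" unfolding L_def H_def by auto
  have "card (L \<union> H) \<le> card L + card H" by (rule card_Un_le)
  hence c: "N + 0 \<le> card L + card H" using LH by simp
  show ?case
    apply (rule exI[of _ L], rule exI[of _ H])
    using LH c unfolding L_def H_def by (auto simp: Ec_def field_simps)
next
  case (Suc n)
  let ?W = "Suc Mw"
  let ?s = "n * ?W"
  let ?\<beta> = "\<delta>^?s * ((B-b)/2)"
  have bp: "?\<beta> \<ge> 0" using dpos bB by simp
  have init1: "\<forall>i<N. x k0 i \<le> B" using init by auto
  have init2: "\<forall>i<N. - x k0 i \<le> - b" using init by auto
  note rec2 = recur_neg[OF rec] and we2 = we_neg[OF we]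
  from Suc.IH obtain L H where L: "L \<subseteq> {..<N}" and H: "H \<subseteq> {..<N}" and LH: "L \<union> H = {..<N}"
    and c: "L = {..<N} \<or> H = {..<N} \<or> N + n \<le> card L + card H"
    and mL: "\<forall>i\<in>L. x (k0+?s) i \<le> B + Ec e k0 ?s - ?\<beta>"
    and mH: "\<forall>i\<in>H. - x (k0+?s) i \<le> -b + Ec e k0 ?s - ?\<beta>" by blast
  have eqs: "Suc n * ?W = ?s + ?W" by simp
  have eqb: "\<delta>^?W * ?\<beta> = \<delta>^(Suc n * ?W) * ((B-b)/2)"
    by (simp add: eqs power_add)
  have pL: "\<forall>i\<in>L. x (k0+Suc n * ?W) i \<le> B + Ec e k0 (Suc n * ?W) - \<delta>^(Suc n * ?W) * ((B-b)/2)"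
    using persist_set[OF rec we init1 L mL bp, of ?W] unfolding eqb eqs by simp
  have pH: "\<forall>i\<in>H. - x (k0+Suc n * ?W) i \<le> -b + Ec e k0 (Suc n * ?W) - \<delta>^(Suc n * ?W) * ((B-b)/2)"
    using persist_set[OF rec2 we2 init2 H mH bp, of ?W] unfolding eqb eqs by simp
  show ?case
  proof (cases "L = {..<N} \<or> H = {..<N}")
    case True
    then show ?thesis using L H LH pL pH by blast
  next
    case False
    then have cc: "N + n \<le> card L + card H" using c by blast
    from False obtain v1 where v1: "v1<N" "v1 \<notin> L" using L by blast
    from False obtain v2 where v2: "v2<N" "v2 \<notin> H" using H by blast
    obtain r where r: "r<N" and root: "\<forall>v<N. v\<noteq>r \<longrightarrow> (r,v) \<in> (Eu N P Mw (k0+?s))\<^sup>+"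
      using conn by blast
    have fin: "finite L" "finite H" using L H finite_subset by auto
    show ?thesis
    proof (cases "r \<in> L")
      case True
      from window[OF rec we init1 L mL bp v1 True root] obtain i1 where
        i1: "i1<N" "i1 \<notin> L" and m1: "\<forall>i\<in>insert i1 L. x (k0+(?s+?W)) i \<le> B + Ec e k0 (?s+?W) - \<delta>^?W * ?\<beta>"
        by blast
      have "card (insert i1 L) = Suc (card L)" using i1 fin by simp
      then have c2: "N + Suc n \<le> card (insert i1 L) + card H" using cc by simp
      have m1': "\<forall>i\<in>insert i1 L. x (k0+Suc n * ?W) i \<le> B + Ec e k0 (Suc n * ?W) - \<delta>^(Suc n * ?W) * ((B-b)/2)"
        using m1 unfolding eqb eqs .
      have s1: "insert i1 L \<subseteq> {..<N}" "insert i1 L \<union> H = {..<N}" using L LH i1 by auto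
      show ?thesis
        apply (rule exI[of _ "insert i1 L"], rule exI[of _ H])
        using s1 H c2 m1' pH by blast
    next
      case False
      then have rH: "r \<in> H" using LH r by auto
      from window[OF rec2 we2 init2 H mH bp v2 rH root] obtain i1 where
        i1: "i1<N" "i1 \<notin> H" and m1: "\<forall>i\<in>insert i1 H. - x (k0+(?s+?W)) i \<le> -b + Ec e k0 (?s+?W) - \<delta>^?W * ?\<beta>"
        by blast
      have "card (insert i1 H) = Suc (card H)" using i1 fin by simp
      then have c2: "N + Suc n \<le> card L + card (insert i1 H)" using cc by simp
      have m1': "\<forall>i\<in>insert i1 H. - x (k0+Suc n * ?W) i \<le> -b + Ec e k0 (Suc n * ?W) - \<delta>^(Suc n * ?W) * ((B-b)/2)"
        using m1 unfolding eqb eqs .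
      have s1: "insert i1 H \<subseteq> {..<N}" "L \<union> insert i1 H = {..<N}" using H LH i1 by auto
      show ?thesis
        apply (rule exI[of _ L], rule exI[of _ "insert i1 H"])
        using s1 L c2 m1' pL by blast
    qed
  qed
qed

lemma contract:
  assumes rec: "recur x w" and we: "\<forall>t i. i<N \<longrightarrow> \<bar>w t i\<bar> \<le> e t"
    and init: "\<forall>i<N. b \<le> x k0 i \<and> x k0 i \<le> B" and bB: "b \<le> B"
  shows "(\<forall>i<N. x (k0+N*Suc Mw) i \<le> B + Ec e k0 (N*Suc Mw) - \<delta>^(N*Suc Mw) * ((B-b)/2)) \<or>
         (\<forall>i<N. x (k0+N*Suc Mw) i \<ge> b - Ec e k0 (N*Suc Mw) + \<delta>^(N*Suc Mw) * ((B-b)/2))"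
proof -
  from iter[OF rec we init bB, of N] obtain L H where L: "L \<subseteq> {..<N}" and H: "H \<subseteq> {..<N}"
    and c: "L = {..<N} \<or> H = {..<N} \<or> N + N \<le> card L + card H"
    and mL: "\<forall>i\<in>L. x (k0+N*Suc Mw) i \<le> B + Ec e k0 (N*Suc Mw) - \<delta>^(N*Suc Mw) * ((B-b)/2)"
    and mH: "\<forall>i\<in>H. - x (k0+N*Suc Mw) i \<le> -b + Ec e k0 (N*Suc Mw) - \<delta>^(N*Suc Mw) * ((B-b)/2)"
    by blast
  have "L = {..<N} \<or> H = {..<N}"
  proof (cases "N + N \<le> card L + card H")
    case True
    have "card L \<le> N" "card H \<le> N" using card_mono[OF _ L] card_mono[OF _ H] by auto
    then have "card L = card {..<N}" using True by simp
    then have "L = {..<N}" using card_subset_eq[OF _ L] by simp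
    then show ?thesis by blast
  next
    case False then show ?thesis using c by blast
  qed
  then show ?thesis
  proof
    assume "L = {..<N}" then show ?thesis using mL by auto
  next
    assume "H = {..<N}" then show ?thesis using mH by force
  qed
qed

definition Mx :: "(nat \<Rightarrow> nat \<Rightarrow> real) \<Rightarrow> nat \<Rightarrow> real" where
  "Mx x t = Max ((\<lambda>i. x t i) ` {..<N})"
definition mx :: "(nat \<Rightarrow> nat \<Rightarrow> real) \<Rightarrow> nat \<Rightarrow> real" where
  "mx x t = Min ((\<lambda>i. x t i) ` {..<N})"

lemma Mx_ge: "i<N \<Longrightarrow> x t i \<le> Mx x t"
  unfolding Mx_def by (rule Max_ge) auto
lemma mx_le: "i<N \<Longrightarrow> mx x t \<le> x t i"
  unfolding mx_def by (rule Min_le) auto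
lemma Mx_le: "(\<And>i. i<N \<Longrightarrow> x t i \<le> c) \<Longrightarrow> Mx x t \<le> c"
  unfolding Mx_def using Npos by (intro Max.boundedI) auto
lemma mx_ge: "(\<And>i. i<N \<Longrightarrow> c \<le> x t i) \<Longrightarrow> c \<le> mx x t"
  unfolding mx_def using Npos by (intro Min.boundedI) auto
lemma mx_le_Mx: "mx x t \<le> Mx x t"
  using mx_le[of 0 x t] Mx_ge[of 0 x t] Npos by linarith

lemma bounds_gen:
  assumes rec: "recur x w" and we: "\<forall>t i. i<N \<longrightarrow> \<bar>w t i\<bar> \<le> e t"
  shows "Mx x (k0+s) \<le> Mx x k0 + Ec e k0 s" "mx x k0 - Ec e k0 s \<le> mx x (k0+s)"
proof -
  have "\<forall>i<N. x k0 i \<le> Mx x k0" using Mx_ge by blast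
  from all_bound[OF rec we this] show "Mx x (k0+s) \<le> Mx x k0 + Ec e k0 s" by (intro Mx_le) auto
  have "\<forall>i<N. - x k0 i \<le> - mx x k0" using mx_le by auto
  from all_bound[OF recur_neg[OF rec] we_neg[OF we] this, of s]
  show "mx x k0 - Ec e k0 s \<le> mx x (k0+s)" by (intro mx_ge) force
qed

lemma sp_contract:
  assumes rec: "recur x w" and we: "\<forall>t i. i<N \<longrightarrow> \<bar>w t i\<bar> \<le> e t"
  shows "Mx x (k0+N*Suc Mw) - mx x (k0+N*Suc Mw) \<le>
     (1 - \<delta>^(N*Suc Mw)/2) * (Mx x k0 - mx x k0) + 2 * Ec e k0 (N*Suc Mw)"
proof -
  let ?T = "N*Suc Mw"
  let ?B = "Mx x k0" and ?b = "mx x k0"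
  have init: "\<forall>i<N. ?b \<le> x k0 i \<and> x k0 i \<le> ?B" using Mx_ge mx_le by blast
  note bg = bounds_gen[OF rec we, of k0 ?T]
  from contract[OF rec we init mx_le_Mx] show ?thesis
  proof
    assume h: "\<forall>i<N. x (k0+?T) i \<le> ?B + Ec e k0 ?T - \<delta>^?T * ((?B-?b)/2)"
    have "Mx x (k0+?T) \<le> ?B + Ec e k0 ?T - \<delta>^?T * ((?B-?b)/2)" using h by (intro Mx_le) auto
    with bg(2) show ?thesis by (simp add: algebra_simps)
  next
    assume h: "\<forall>i<N. x (k0+?T) i \<ge> ?b - Ec e k0 ?T + \<delta>^?T * ((?B-?b)/2)"
    have "mx x (k0+?T) \<ge> ?b - Ec e k0 ?T + \<delta>^?T * ((?B-?b)/2)" using h by (intro mx_ge) auto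
    with bg(1) show ?thesis by (simp add: algebra_simps)
  qed
qed

lemma bseq_help: "(\<forall>t. (c::real) \<le> f t \<and> f t \<le> d) \<Longrightarrow> Bseq f"
proof -
  assume a: "\<forall>t. c \<le> f t \<and> f t \<le> d"
  show "Bseq f"
  proof (rule BseqI'[where K="\<bar>c\<bar> + \<bar>d\<bar>"])
    fix n from a[rule_format, of n] show "norm (f n) \<le> \<bar>c\<bar> + \<bar>d\<bar>" by (simp add: abs_le_iff) linarith
  qed
qed

lemma converge:
  assumes rec: "recur x w" and we: "\<forall>t i. i<N \<longrightarrow> \<bar>w t i\<bar> \<le> e t"
    and sm: "summable e"
  shows "\<exists>L. \<forall>i<N. (\<lambda>t. x t i) \<longlonglongrightarrow> L"
proof -
  have e0: "0 \<le> e t" for t using we Npos by (meson abs_ge_zero order_trans)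
  define S where "S t = (\<Sum>j<t. e j)" for t
  have S_lim: "S \<longlonglongrightarrow> suminf e" unfolding S_def using summable_LIMSEQ[OF sm] .
  have S_le: "S t \<le> suminf e" for t unfolding S_def by (rule sum_le_suminf[OF sm]) (auto simp: e0)
  have S0: "0 \<le> S t" for t unfolding S_def by (simp add: e0 sum_nonneg)
  have Ec0: "Ec e 0 t = S t" for t unfolding Ec_def S_def by simp
  have Msuc: "Mx x (Suc t) \<le> Mx x t + e t" for t
    using bounds_gen(1)[OF rec we, of t 1] by (simp add: Ec_def)
  have msuc: "mx x t - e t \<le> mx x (Suc t)" for t
    using bounds_gen(2)[OF rec we, of t 1] by (simp add: Ec_def)
  have mlow: "mx x 0 - S t \<le> mx x t" for t
    using bounds_gen(2)[OF rec we, of 0 t] by (simp add: Ec0)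
  have Mup: "Mx x t \<le> Mx x 0 + S t" for t
    using bounds_gen(1)[OF rec we, of 0 t] by (simp add: Ec0)
  define h where "h t = Mx x t - S t" for t
  define h' where "h' t = mx x t + S t" for t
  have hdec: "decseq h" unfolding decseq_Suc_iff h_def S_def using Msuc by (simp add: algebra_simps)
  have hinc: "incseq h'" unfolding incseq_Suc_iff h'_def S_def using msuc by (simp add: algebra_simps)
  have "convergent h"
  proof (rule Bseq_monoseq_convergent)
    show "monoseq h" using hdec unfolding monoseq_iff by blast
    have "mx x 0 - 2 * suminf e \<le> h t" for t
      using mlow[of t] mx_le_Mx[of x t] S_le[of t] unfolding h_def by linarith
    moreover have "h t \<le> h 0" for t using hdec unfolding decseq_def by auto
    ultimately show "Bseq h" by (intro bseq_help) blast
  qed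
  then obtain Lh where Lh: "h \<longlonglongrightarrow> Lh" unfolding convergent_def by blast
  have "convergent h'"
  proof (rule Bseq_monoseq_convergent)
    show "monoseq h'" using hinc unfolding monoseq_iff by blast
    have "h' t \<le> Mx x 0 + 2 * suminf e" for t
      using Mup[of t] mx_le_Mx[of x t] S_le[of t] unfolding h'_def by linarith
    moreover have "h' 0 \<le> h' t" for t using hinc unfolding incseq_def by auto
    ultimately show "Bseq h'" by (intro bseq_help) blast
  qed
  then obtain Lh' where Lh': "h' \<longlonglongrightarrow> Lh'" unfolding convergent_def by blast
  have MxL: "Mx x \<longlonglongrightarrow> Lh + suminf e"
  proof -
    have "(\<lambda>t. h t + S t) \<longlonglongrightarrow> Lh + suminf e" by (intro tendsto_add Lh S_lim)
    thus ?thesis unfolding h_def by simp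
  qed
  have mxL: "mx x \<longlonglongrightarrow> Lh' - suminf e"
  proof -
    have "(\<lambda>t. h' t - S t) \<longlonglongrightarrow> Lh' - suminf e" by (intro tendsto_diff Lh' S_lim)
    thus ?thesis unfolding h'_def by simp
  qed
  define LM where "LM = Lh + suminf e"
  define Lm where "Lm = Lh' - suminf e"
  let ?T = "N*Suc Mw"
  define \<gamma> where "\<gamma> = \<delta>^?T/2"
  have gpos: "0 < \<gamma>" unfolding \<gamma>_def using dpos by simp
  have ez: "e \<longlonglongrightarrow> 0" by (rule summable_LIMSEQ_zero[OF sm])
  have Ecz: "(\<lambda>t. Ec e t ?T) \<longlonglongrightarrow> 0"
  proof -
    have "(\<lambda>t. \<Sum>j<?T. e (t+j)) \<longlonglongrightarrow> (\<Sum>j<?T. 0)"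
      apply (rule tendsto_sum)
      subgoal for j using LIMSEQ_ignore_initial_segment[OF ez, of j] by (simp add: add.commute)
      done
    thus ?thesis unfolding Ec_def by simp
  qed
  have lhs: "(\<lambda>t. Mx x (t+?T) - mx x (t+?T)) \<longlonglongrightarrow> LM - Lm"
    unfolding LM_def Lm_def
    by (intro tendsto_diff LIMSEQ_ignore_initial_segment MxL mxL)
  have rhs: "(\<lambda>t. (1 - \<gamma>) * (Mx x t - mx x t) + 2 * Ec e t ?T) \<longlonglongrightarrow> (1-\<gamma>) * (LM - Lm) + 2 * 0"
    unfolding LM_def Lm_def by (intro tendsto_intros MxL mxL Ecz)
  have "LM - Lm \<le> (1-\<gamma>) * (LM - Lm) + 2 * 0"
    apply (rule LIMSEQ_le[OF lhs rhs])
    using sp_contract[OF rec we] unfolding \<gamma>_def by (auto simp: add.commute)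
  hence "\<gamma> * (LM - Lm) \<le> 0" by (simp add: algebra_simps)
  hence le1: "LM \<le> Lm" using gpos by (simp add: mult_le_0_iff)
  have le2: "Lm \<le> LM" unfolding LM_def Lm_def
    by (rule LIMSEQ_le[OF mxL MxL]) (auto intro: mx_le_Mx)
  have MxL2: "Mx x \<longlonglongrightarrow> LM" using MxL unfolding LM_def .
  have "Lm = LM" using le1 le2 by simp
  hence mxL2: "mx x \<longlonglongrightarrow> LM" using mxL unfolding Lm_def by simp
  show ?thesis
  proof (intro exI allI impI)
    fix i assume i: "i<N"
    show "(\<lambda>t. x t i) \<longlonglongrightarrow> LM"
      by (rule tendsto_sandwich[OF _ _ mxL2 MxL2]) (use mx_le Mx_ge i in auto)
  qed
qed

end


lemma smult_mat_vec: assumes "A \<in> carrier_mat n n" "v \<in> carrier_vec n"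
  shows "(c \<cdot>\<^sub>m A) *\<^sub>v v = c \<cdot>\<^sub>v (A *\<^sub>v v)"
  by (rule eq_vecI) (use assms in \<open>auto simp: scalar_prod_def sum_distrib_left algebra_simps\<close>)

lemma eigenvalue_smult: assumes A: "A \<in> carrier_mat n n" and c: "(c::complex) \<noteq> 0"
  and ev: "eigenvalue (c \<cdot>\<^sub>m A) ev" shows "eigenvalue A (ev / c)"
proof -
  from ev obtain v where v: "eigenvector (c \<cdot>\<^sub>m A) v ev" unfolding eigenvalue_def by blast
  hence vc: "v \<in> carrier_vec n" "v \<noteq> 0\<^sub>v n" "(c \<cdot>\<^sub>m A) *\<^sub>v v = ev \<cdot>\<^sub>v v"
    unfolding eigenvector_def using A by auto
  have "c \<cdot>\<^sub>v (A *\<^sub>v v) = ev \<cdot>\<^sub>v v" using vc smult_mat_vec[OF A vc(1)] by simp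
  have "A *\<^sub>v v = (ev / c) \<cdot>\<^sub>v v"
  proof (rule eq_vecI)
    fix i assume i: "i < dim_vec ((ev / c) \<cdot>\<^sub>v v)"
    hence i': "i < n" using vc by simp
    have "(c \<cdot>\<^sub>v (A *\<^sub>v v)) $ i = (ev \<cdot>\<^sub>v v) $ i" using \<open>c \<cdot>\<^sub>v (A *\<^sub>v v) = ev \<cdot>\<^sub>v v\<close> by simp
    hence "c * (A *\<^sub>v v) $ i = ev * v $ i" using i' A vc by simp
    thus "(A *\<^sub>v v) $ i = ((ev / c) \<cdot>\<^sub>v v) $ i" using i' c vc by (simp add: field_simps)
  qed (use A vc in auto)
  thus ?thesis unfolding eigenvalue_def eigenvector_def using vc A by auto
qed

lemma pow_smult: assumes A: "(A :: complex mat) \<in> carrier_mat n n"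
  shows "(c \<cdot>\<^sub>m A) ^\<^sub>m k = (c ^ k) \<cdot>\<^sub>m (A ^\<^sub>m k)"
proof (induction k)
  case 0 then show ?case using A by (auto intro!: eq_matI)
next
  case (Suc k)
  have "(c \<cdot>\<^sub>m A) ^\<^sub>m Suc k = ((c ^ k) \<cdot>\<^sub>m (A ^\<^sub>m k)) * (c \<cdot>\<^sub>m A)" using Suc by simp
  also have "\<dots> = (c^k) \<cdot>\<^sub>m ((A ^\<^sub>m k) * (c \<cdot>\<^sub>m A))" by (rule mult_smult_assoc_mat) (use A in auto)
  also have "\<dots> = (c^k) \<cdot>\<^sub>m (c \<cdot>\<^sub>m (A ^\<^sub>m k * A))" by (subst mult_smult_distrib) (use A in auto)
  also have "\<dots> = (c ^ Suc k) \<cdot>\<^sub>m (A ^\<^sub>m Suc k)" by (auto intro!: eq_matI)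
  finally show ?case .
qed

lemma decay:
  assumes B: "B \<in> carrier_mat m m" and m: "m > 0"
    and ev: "\<forall>ev. eigenvalue (map_mat complex_of_real B) ev \<longrightarrow> cmod ev < 1"
  shows "\<exists>c r. 0 < r \<and> r < 1 \<and> (\<forall>k a b. a<m \<longrightarrow> b<m \<longrightarrow> \<bar>(B ^\<^sub>m k) $$ (a,b)\<bar> \<le> c * r^k)"
proof -
  define Bc where "Bc = map_mat complex_of_real B"
  have Bc: "Bc \<in> carrier_mat m m" using B unfolding Bc_def by simp
  define \<rho> where "\<rho> = Max (insert 0 (cmod ` spectrum Bc))"
  have fin: "finite (insert 0 (cmod ` spectrum Bc))" using card_finite_spectrum(1)[OF Bc] by simp
  have rho1: "\<rho> < 1" unfolding \<rho>_def using fin ev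
    by (subst Max_less_iff) (auto simp: spectrum_def Bc_def)
  have rho0: "0 \<le> \<rho>" unfolding \<rho>_def using fin by (intro Max_ge) auto
  have rho_ge: "eigenvalue Bc z \<Longrightarrow> cmod z \<le> \<rho>" for z
    unfolding \<rho>_def using fin by (intro Max_ge) (auto simp: spectrum_def)
  define r where "r = (1 + \<rho>) / 2"
  have r: "0 < r" "r < 1" "\<rho> < r" using rho0 rho1 unfolding r_def by auto
  define D where "D = complex_of_real (1/r) \<cdot>\<^sub>m Bc"
  have D: "D \<in> carrier_mat m m" using Bc unfolding D_def by simp
  have "spectral_radius D < 1"
  proof -
    from spectral_radius_mem_max(1)[OF D m] obtain z where z: "z \<in> spectrum D" and sz: "spectral_radius D = cmod z"
      by auto
    have "eigenvalue Bc (z / complex_of_real (1/r))"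
      by (rule eigenvalue_smult[OF Bc]) (use z r in \<open>auto simp: D_def spectrum_def\<close>)
    hence "cmod (z / complex_of_real (1/r)) \<le> \<rho>" by (rule rho_ge)
    hence "cmod z * r \<le> \<rho>" using r by (simp add: norm_divide norm_mult)
    hence "cmod z * r < 1 * r" using r by linarith
    hence "cmod z < 1" using r mult_less_cancel_right_pos by blast
    thus ?thesis using sz by simp
  qed
  from spectral_radius_jnf_norm_bound_less_1_upper_triangular[OF D this] obtain c where
    c: "\<forall>k. norm_bound (D ^\<^sub>m k) c" by blast
  show ?thesis
  proof (intro exI conjI allI impI)
    show "0 < r" "r < 1" using r by auto
    fix k a b assume a: "a < m" and b: "b < m"
    have "D ^\<^sub>m k = (complex_of_real (1/r) ^ k) \<cdot>\<^sub>m (Bc ^\<^sub>m k)" unfolding D_def by (rule pow_smult[OF Bc])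
    also have "Bc ^\<^sub>m k = map_mat complex_of_real (B ^\<^sub>m k)" unfolding Bc_def
      by (rule of_real_hom.mat_hom_pow[OF B, symmetric])
    finally have eq: "(D ^\<^sub>m k) $$ (a,b) = complex_of_real ((1/r)^k * (B ^\<^sub>m k) $$ (a,b))"
      using a b B by simp
    have "norm ((D ^\<^sub>m k) $$ (a,b)) \<le> c" using c a b D unfolding norm_bound_def by auto
    hence "\<bar>(1/r)^k * (B ^\<^sub>m k) $$ (a,b)\<bar> \<le> c" unfolding eq norm_of_real .
    hence "(1/r)^k * \<bar>(B ^\<^sub>m k) $$ (a,b)\<bar> \<le> c" using r by (simp add: abs_mult)
    hence "r^k * ((1/r)^k * \<bar>(B ^\<^sub>m k) $$ (a,b)\<bar>) \<le> r^k * c" using r by (simp add: mult_left_mono)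
    thus "\<bar>(B ^\<^sub>m k) $$ (a,b)\<bar> \<le> c * r^k" using r by (simp add: power_one_over field_simps)
  qed
qed



lemma kron_entry: assumes R: "(R::real mat) \<in> carrier_mat 1 m" and i: "i<N" and l: "l < N*m"
  shows "kron (1\<^sub>m N) R $$ (i,l) = (if i = l div m then R $$ (0, l mod m) else 0)"
proof -
  have m: "0 < m" using l by (cases m) auto
  have ld: "l div m < N" using l by (simp add: less_mult_imp_div_less mult.commute)
  show ?thesis unfolding kron_def using R i l ld m by auto
qed

lemma omega_bound:
  assumes R: "(R::real mat) \<in> carrier_mat 1 m" and e0: "e0 \<in> carrier_vec (N*m)" and i: "i<N"
    and Rb: "\<forall>c<m. \<bar>R $$ (0,c)\<bar> \<le> b"
  shows "\<bar>(kron (1\<^sub>m N) R *\<^sub>v e0) $ i\<bar> \<le> b * (\<Sum>l<N*m. \<bar>e0 $ l\<bar>)"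
proof -
  have dims: "dim_row (kron (1\<^sub>m N) R) = N" "dim_col (kron (1\<^sub>m N) R) = N*m"
    using R unfolding kron_def by auto
  have "(kron (1\<^sub>m N) R *\<^sub>v e0) $ i = (\<Sum>l<N*m. kron (1\<^sub>m N) R $$ (i,l) * e0 $ l)"
    using dims i e0 by (simp add: scalar_prod_def atLeast0LessThan)
  also have "\<bar>\<dots>\<bar> \<le> (\<Sum>l<N*m. \<bar>kron (1\<^sub>m N) R $$ (i,l) * e0 $ l\<bar>)" by (rule sum_abs)
  also have "\<dots> \<le> (\<Sum>l<N*m. b * \<bar>e0 $ l\<bar>)"
  proof (rule sum_mono)
    fix l assume l: "l \<in> {..<N*m}"
    have m: "0 < m" using l by (cases m) auto
    have "\<bar>kron (1\<^sub>m N) R $$ (i,l)\<bar> \<le> b"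
      using kron_entry[OF R i] l Rb m by (auto simp: Rb order_trans[OF _ Rb[rule_format]])
    thus "\<bar>kron (1\<^sub>m N) R $$ (i,l) * e0 $ l\<bar> \<le> b * \<bar>e0 $ l\<bar>"
      by (simp add: abs_mult mult_right_mono)
  qed
  also have "\<dots> = b * (\<Sum>l<N*m. \<bar>e0 $ l\<bar>)" by (simp add: sum_distrib_left)
  finally show ?thesis .
qed


theorem lemma3:
  fixes N m :: nat
    and C K5 K6 :: "real mat"
    and e0 :: "real vec"
    and Sidx :: "'q set"
    and alpha :: "'q \<Rightarrow> nat \<Rightarrow> nat \<Rightarrow> real"
    and sigma :: "nat \<Rightarrow> 'q"
    and Z :: "nat \<Rightarrow> real vec"
  assumes "N \<ge> 1" and "m \<ge> 2"
    and "C \<in> carrier_mat 1 m" and "K5 \<in> carrier_mat 1 m" and "K6 \<in> carrier_mat m 1"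
    and "\<forall>ev. eigenvalue (map_mat complex_of_real (integrator m + K6 * C)) ev \<longrightarrow> cmod ev < 1"
    and "e0 \<in> carrier_vec (N * m)"
    and "finite Sidx"
    and "\<forall>q\<in>Sidx. \<forall>i j. alpha q i j \<ge> 0"
    and "\<forall>q\<in>Sidx. \<forall>i. alpha q i i = 0"
    and "\<forall>k. sigma k \<in> Sidx"
    and "UJQSC alpha N sigma"
    and "Z 0 \<in> carrier_vec N"
    and "\<forall>k. Z (Suc k) = (1\<^sub>m N - Smat alpha N (sigma k)) *\<^sub>v Z k
                       + omega_d N (integrator m) C K5 K6 e0 k"
  shows "\<exists>zs::real. \<forall>i<N. (\<lambda>k. Z k $ i) \<longlonglongrightarrow> zs"
proof -
  note as = assms
  define A where "A = integrator m"
  define Bm where "Bm = A + K6 * C"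
  have m0: "0 < m" using as(2) by simp
  have Am: "A \<in> carrier_mat m m" unfolding A_def integrator_def by simp
  have Bm: "Bm \<in> carrier_mat m m" unfolding Bm_def using Am as(3,5) by auto
  have evh: "\<forall>ev. eigenvalue (map_mat complex_of_real Bm) ev \<longrightarrow> cmod ev < 1"
    using as(6) unfolding Bm_def A_def .
  from decay[OF Bm m0 evh] obtain cc r where r: "0 < r" "r < 1"
    and bd: "\<forall>k a b. a<m \<longrightarrow> b<m \<longrightarrow> \<bar>(Bm ^\<^sub>m k) $$ (a,b)\<bar> \<le> cc * r^k" by blast
  define Kc where "Kc = K5 * K6 * C"
  have Kc: "Kc \<in> carrier_mat 1 m" unfolding Kc_def using as(3,4,5) by auto
  define Ka where "Ka = (\<Sum>a<m. \<bar>Kc $$ (0,a)\<bar>)"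
  define E0 where "E0 = (\<Sum>l<N*m. \<bar>e0 $ l\<bar>)"
  define e where "e k = (Ka * cc * E0) * r^k" for k
  have Rcar: "Kc * (Bm ^\<^sub>m k) \<in> carrier_mat 1 m" for k using Kc Bm by auto
  have Rb: "\<forall>c<m. \<bar>(Kc * (Bm ^\<^sub>m k)) $$ (0,c)\<bar> \<le> Ka * cc * r^k" for k
  proof (intro allI impI)
    fix c assume c: "c < m"
    have "(Kc * (Bm ^\<^sub>m k)) $$ (0,c) = (\<Sum>a<m. Kc $$ (0,a) * (Bm ^\<^sub>m k) $$ (a,c))"
      using Kc Bm c by (simp add: scalar_prod_def atLeast0LessThan)
    also have "\<bar>\<dots>\<bar> \<le> (\<Sum>a<m. \<bar>Kc $$ (0,a) * (Bm ^\<^sub>m k) $$ (a,c)\<bar>)" by (rule sum_abs)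
    also have "\<dots> \<le> (\<Sum>a<m. \<bar>Kc $$ (0,a)\<bar> * (cc * r^k))"
      by (rule sum_mono) (use bd c in \<open>auto simp: abs_mult intro!: mult_left_mono\<close>)
    also have "\<dots> = Ka * cc * r^k" unfolding Ka_def by (simp add: sum_distrib_right mult.assoc)
    finally show "\<bar>(Kc * (Bm ^\<^sub>m k)) $$ (0,c)\<bar> \<le> Ka * cc * r^k" .
  qed
  have om: "omega_d N (integrator m) C K5 K6 e0 k = kron (1\<^sub>m N) (Kc * (Bm ^\<^sub>m k)) *\<^sub>v e0" for k
    unfolding omega_d_def Kc_def Bm_def A_def ..
  have omb: "\<forall>t i. i<N \<longrightarrow> \<bar>omega_d N (integrator m) C K5 K6 e0 t $ i\<bar> \<le> e t"
  proof (intro allI impI)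
    fix t i assume i: "i < N"
    show "\<bar>omega_d N (integrator m) C K5 K6 e0 t $ i\<bar> \<le> e t"
      unfolding om e_def E0_def using omega_bound[OF Rcar as(7) i Rb, of t] by (simp add: ac_simps)
  qed
  have sme: "summable e" unfolding e_def by (intro summable_mult summable_geometric) (use r in auto)
  have omcar: "omega_d N (integrator m) C K5 K6 e0 k \<in> carrier_vec N" for k
  proof -
    have "dim_row (kron (1\<^sub>m N) (Kc * (Bm ^\<^sub>m k))) = N" using Kc unfolding kron_def by simp
    thus ?thesis unfolding om carrier_vec_def by simp
  qed
  have Zcar: "Z k \<in> carrier_vec N" for k
  proof (induction k)
    case 0 show ?case using as(13) .
  next
    case (Suc k)
    have eq: "Z (Suc k) = (1\<^sub>m N - Smat alpha N (sigma k)) *\<^sub>v Z k + omega_d N (integrator m) C K5 K6 e0 k"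
      using as(14) by blast
    have "dim_vec (omega_d N (integrator m) C K5 K6 e0 k) = N" using omcar[of k] by simp
    then show ?case unfolding eq carrier_vec_def by simp
  qed
  define P where "P t i j = (1\<^sub>m N - Smat alpha N (sigma t)) $$ (i,j)" for t i j
  define dg where "dg t i = deg alpha N (sigma t) i" for t i
  have anon: "0 \<le> alpha (sigma t) i j" for t i j using as(9,11) by blast
  have dg0: "0 \<le> dg t i" for t i unfolding dg_def deg_def by (rule sum_nonneg) auto
  have dgeq: "dg t i = (\<Sum>j\<in>{..<N}-{i}. alpha (sigma t) i j)" if i: "i<N" for t i
  proof -
    have "dg t i = (\<Sum>j\<in>{j. j < N \<and> j \<noteq> i \<and> alpha (sigma t) i j > 0}. alpha (sigma t) i j)"
      unfolding dg_def deg_def ..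
    also have "\<dots> = (\<Sum>j\<in>{..<N}-{i}. alpha (sigma t) i j)"
      by (rule sum.mono_neutral_left) (use anon in \<open>auto simp: order.order_iff_strict\<close>)
    finally show ?thesis .
  qed
  have Pf: "P t i j = (if i = j then 1 / (1 + dg t i) else alpha (sigma t) i j / (1 + dg t i))"
    if i: "i<N" and j: "j<N" for t i j
  proof -
    have "1 + dg t i \<noteq> 0" using dg0[of t i] by linarith
    then show ?thesis unfolding P_def dg_def using i j by (auto simp: Smat_def field_simps)
  qed
  have P0: "0 \<le> P t i j" if "i<N" "j<N" for t i j
    using Pf[OF that, of t] dg0[of t i] anon[of t i j] by auto
  have Prow: "(\<Sum>j<N. P t i j) = 1" if i: "i<N" for t i
  proof -
    have d: "1 + dg t i > 0" using dg0[of t i] by linarith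
    have "(\<Sum>j<N. P t i j) = P t i i + (\<Sum>j\<in>{..<N}-{i}. P t i j)"
      using i by (simp add: sum.remove)
    also have "(\<Sum>j\<in>{..<N}-{i}. P t i j) = (\<Sum>j\<in>{..<N}-{i}. alpha (sigma t) i j / (1 + dg t i))"
      by (rule sum.cong) (use Pf i in auto)
    also have "\<dots> = dg t i / (1 + dg t i)" using dgeq[OF i] by (simp add: sum_divide_distrib)
    finally show ?thesis using Pf[OF i i] d by (simp add: field_simps)
  qed
  have Ppos_iff: "0 < P t i j \<longleftrightarrow> 0 < alpha (sigma t) i j" if "i<N" "j<N" "i \<noteq> j" for t i j
  proof -
    have d: "1 + dg t i > 0" using dg0[of t i] by linarith
    show ?thesis using Pf[OF that(1,2), of t] that(3) d by (simp add: zero_less_divide_iff)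
  qed
  define Pq where "Pq q i j = (1\<^sub>m N - Smat alpha N q) $$ (i,j)" for q i j
  define F where "F = (\<lambda>(q,i,j). Pq q i j) ` (Sidx \<times> {..<N} \<times> {..<N})"
  have finF: "finite F" unfolding F_def using as(8) by auto
  define \<delta> where "\<delta> = Min (insert 1 {v\<in>F. 0 < v})"
  have finD: "finite (insert 1 {v\<in>F. 0 < v})" using finF by auto
  have dpos: "0 < \<delta>" unfolding \<delta>_def using finD by (subst Min_gr_iff) auto
  have PinF: "P t i j \<in> F" if "i<N" "j<N" for t i j
    unfolding F_def P_def Pq_def using that as(11)
    by (intro image_eqI[where x="(sigma t, i, j)"]) auto
  have Pge: "\<delta> \<le> P t i j" if "i<N" "j<N" "0 < P t i j" for t i j
    unfolding \<delta>_def using finD PinF[OF that(1,2)] that(3) by (intro Min_le) auto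
  have Pdiag: "\<delta> \<le> P t i i" if "i<N" for t i
  proof -
    have "0 < P t i i" using Pf[OF that that, of t] dg0[of t i] by simp
    thus ?thesis using Pge that by blast
  qed
  from as(12) obtain M where M: "M > 0" and qsc: "\<forall>k. quasi_strongly_connected N (union_edges alpha N sigma k M)"
    unfolding UJQSC_def by blast
  have Eueq: "Eu N P M k = union_edges alpha N sigma k M" for k
    unfolding Eu_def union_edges_def using Ppos_iff by fastforce
  have conn: "\<exists>r<N. \<forall>v<N. v\<noteq>r \<longrightarrow> (r,v) \<in> (Eu N P M k)\<^sup>+" for k
    using qsc unfolding Eueq quasi_strongly_connected_def by blast
  interpret cs: cons N P \<delta> M
    by unfold_locales (use P0 Prow Pdiag Pge dpos conn in auto)
  have rec: "cs.recur (\<lambda>t i. Z t $ i) (\<lambda>t i. omega_d N (integrator m) C K5 K6 e0 t $ i)"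
    unfolding cs.recur_def
  proof (intro allI impI)
    fix t i assume i: "i < N"
    have "Z (Suc t) $ i = ((1\<^sub>m N - Smat alpha N (sigma t)) *\<^sub>v Z t) $ i + omega_d N (integrator m) C K5 K6 e0 t $ i"
      using as(14) omcar[of t] i by simp
    also have "((1\<^sub>m N - Smat alpha N (sigma t)) *\<^sub>v Z t) $ i = (\<Sum>j<N. P t i j * Z t $ j)"
      using i Zcar[of t] unfolding P_def by (simp add: Smat_def scalar_prod_def atLeast0LessThan)
    finally show "Z (Suc t) $ i = (\<Sum>j<N. P t i j * Z t $ j) + omega_d N (integrator m) C K5 K6 e0 t $ i" .
  qed
  from cs.converge[OF rec omb sme] show ?thesis .
qed

end
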